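(* Let $r>0$, $L\ge2$, and let $\mathcal D=\{({\bm{x}}_i,y_i)\}_{i=1}^n$, ${\bm{x}}_i\in\mathbb{R}^d$, $y_i\in[K]$, be a dataset that is $r$-separated with respect to the $\ell_\infty$-norm. Then there exists an $L$-layer $\ell_\infty$-distance net ${\bm{g}}:\mathbb{R}^d\to\mathbb{R}^K$ in which every hidden layer has at most $\lceil\frac{n}{L-1}\rceil+K+2d$ neurons, such that the margin-based certified $\ell_\infty$ robust accuracy on $\mathcal D$ under perturbation $\epsilon=r$ is $100\%$, i.e. $\mathsf{margin}({\bm{x}}_i,y_i;{\bm{g}})/2>r$ for every $i\in[n]$.
   Context: $r$-separation: $\mathcal D$ is $r$-separated w.r.t. $\ell_\infty$ if for all $i,j$ with $y_i\neq y_j$ one has $\|{\bm{x}}_i-{\bm{x}}_j\|_\infty>2r$. An $L$-layer $\ell_\infty$-distance net ${\bm{g}}$ with input ${\bm{x}}^{(0)}={\bm{x}}$ computes $x^{(l)}_i=\|{\bm{x}}^{(l-1)}-{\bm{w}}^{(l,i)}\|_\infty+b^{(l)}_i$ ($l\in[L]$, $i\in[n_l]$, arbitrary real parameters), with $n_L=K$ and ${\bm{g}}({\bm{x}})={\bm{x}}^{(L)}$; the hidden layers are $l=1,\dots,L-1$. The output margin is $\mathsf{margin}({\bm{x}},y;{\bm{g}})=[{\bm{g}}({\bm{x}})]_y-\max_{j\neq y}[{\bm{g}}({\bm{x}})]_j$. Margin-based certification declares $({\bm{x}},y)$ certifiably robust at level $\epsilon$ iff $\mathsf{margin}({\bm{x}},y;{\bm{g}})/2>\epsilon$.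 *)

theory Defs
  imports Complex_Main
begin

text \<open>Vectors in R^m are represented as functions nat => real, only the
  coordinates 0..m-1 being relevant. The l_inf norm of the first m coordinates
  (0 for m = 0).\<close>
definition linf_norm :: "nat \<Rightarrow> (nat \<Rightarrow> real) \<Rightarrow> real" where
  "linf_norm m v = Max (insert 0 ((\<lambda>j. \<bar>v j\<bar>) ` {..<m}))"

text \<open>A neuron of an l_inf-distance net: weight vector w and bias b,
  computing u |-> ||u - w||_inf + b.  A layer is a list of neurons.\<close>
type_synonym neuron = "(nat \<Rightarrow> real) \<times> real"
type_synonym layer = "neuron list"

definition eval_layer :: "nat \<Rightarrow> layer \<Rightarrow> (nat \<Rightarrow> real) \<Rightarrow> (nat \<Rightarrow> real)" where
  "eval_layer m ly u = (\<lambda>i. if i < length ly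
      then linf_norm m (\<lambda>j. u j - fst (ly ! i) j) + snd (ly ! i) else 0)"

fun eval_net :: "nat \<Rightarrow> layer list \<Rightarrow> (nat \<Rightarrow> real) \<Rightarrow> (nat \<Rightarrow> real)" where
  "eval_net m [] u = u"
| "eval_net m (ly # lys) u = eval_net (length ly) lys (eval_layer m ly u)"

definition margin :: "nat \<Rightarrow> (nat \<Rightarrow> real) \<Rightarrow> nat \<Rightarrow> real" where
  "margin K g y = g y - Max ((\<lambda>j. g j) ` ({..<K} - {y}))"

definition r_separated :: "real \<Rightarrow> nat \<Rightarrow> nat \<Rightarrow> (nat \<Rightarrow> nat \<Rightarrow> real) \<Rightarrow> (nat \<Rightarrow> nat) \<Rightarrow> bool" where
  "r_separated r d n x y \<longleftrightarrow>
     (\<forall>i<n. \<forall>j<n. y i \<noteq> y j \<longrightarrow> linf_norm d (\<lambda>k. x i k - x j k) > 2 * r)"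

end

theory Submission
  imports Defs
begin

lemma finite_bound: "finite F \<Longrightarrow> \<exists>R. \<forall>z\<in>F. \<bar>f z\<bar> \<le> (R::real)"
  by (rule exI[of _ "\<Sum>z\<in>F. \<bar>f z\<bar>"]) (auto intro: member_le_sum)

lemma lin_neuron:
  fixes u a s :: "nat \<Rightarrow> real"
  assumes S: "S \<subseteq> {..<m}" "S \<noteq> {}" and sgn: "\<forall>j\<in>S. s j = 1 \<or> s j = -1"
    and bu: "\<forall>j<m. \<bar>u j\<bar> \<le> R" and ba: "\<forall>j\<in>S. \<bar>a j\<bar> \<le> R" and H: "3*R < H"
  shows "linf_norm m (\<lambda>j. u j - (if j\<in>S then s j*(a j - H) else 0)) + - H
     = Max ((\<lambda>j. s j * u j - a j) ` S)"
proof -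
  have finS: "finite S" using S(1) finite_subset by blast
  define M where "M = Max ((\<lambda>j. s j * u j - a j) ` S)"
  obtain j0 where j0: "j0 \<in> S" "M = s j0 * u j0 - a j0"
  proof -
    have "M \<in> (\<lambda>j. s j * u j - a j) ` S" unfolding M_def using finS S(2) by (intro Max_in) auto
    then show ?thesis using that by blast
  qed
  have R0: "0 \<le> R" using bu S j0(1) by force
  have fS: "\<bar>u j - s j*(a j - H)\<bar> = s j * u j - a j + H" if "j\<in>S" for j
  proof -
    have "s j = 1 \<or> s j = -1" using sgn that by auto
    moreover have "\<bar>u j\<bar> \<le> R" using bu S that by auto
    moreover have "\<bar>a j\<bar> \<le> R" using ba that by auto
    ultimately show ?thesis using H by (auto simp: abs_if split: if_splits)
  qed
  have Mlow: "M \<ge> -2*R"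
  proof -
    have "s j0 = 1 \<or> s j0 = -1" using sgn j0 by auto
    moreover have "\<bar>u j0\<bar> \<le> R" using bu S j0 by auto
    moreover have "\<bar>a j0\<bar> \<le> R" using ba j0 by auto
    ultimately show ?thesis using j0(2) by (auto simp: abs_if split: if_splits)
  qed
  have "Max (insert 0 ((\<lambda>j. \<bar>u j - (if j\<in>S then s j*(a j - H) else 0)\<bar>) ` {..<m})) = M + H"
  proof (rule Max_eqI)
    fix z assume "z \<in> insert 0 ((\<lambda>j. \<bar>u j - (if j\<in>S then s j*(a j - H) else 0)\<bar>) ` {..<m})"
    then consider "z = 0" | j where "j < m" "z = \<bar>u j - (if j\<in>S then s j*(a j - H) else 0)\<bar>"
      by auto
    then show "z \<le> M + H"
    proof cases
      case 1 then show ?thesis using Mlow H R0 by linarith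
    next
      case 2
      show ?thesis
      proof (cases "j \<in> S")
        case True
        have "s j * u j - a j \<le> M" unfolding M_def using finS True by auto
        then show ?thesis using 2 True fS by auto
      next
        case False
        have "\<bar>u j\<bar> \<le> R" using bu 2 by auto
        then show ?thesis using 2 False Mlow H by auto
      qed
    qed
  next
    show "M + H \<in> insert 0 ((\<lambda>j. \<bar>u j - (if j\<in>S then s j*(a j - H) else 0)\<bar>) ` {..<m})"
      using j0 fS[OF j0(1)] S(1) by (auto intro!: image_eqI[of _ _ j0])
  qed simp
  then show ?thesis unfolding linf_norm_def M_def by simp
qed

lemma eval_net_snoc:
  "eval_net m (xs @ [ly]) u = eval_layer (if xs = [] then m else length (last xs)) ly (eval_net m xs u)"
  by (induction xs arbitrary: m u) auto

definition linN :: "real \<Rightarrow> nat set \<Rightarrow> (nat \<Rightarrow> real) \<Rightarrow> (nat \<Rightarrow> real) \<Rightarrow> neuron" where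
  "linN H S s a = ((\<lambda>j. if j\<in>S then s j*(a j - H) else 0), -H)"

lemma lin_neuron':
  fixes u a s :: "nat \<Rightarrow> real"
  assumes "S \<subseteq> {..<m}" "S \<noteq> {}" "\<forall>j\<in>S. s j = 1 \<or> s j = -1"
    "\<forall>j<m. \<bar>u j\<bar> \<le> R" "\<forall>j\<in>S. \<bar>a j\<bar> \<le> R" "3*R < H"
  shows "linf_norm m (\<lambda>j. u j - fst (linN H S s a) j) + snd (linN H S s a)
     = Max ((\<lambda>j. s j * u j - a j) ` S)"
  using lin_neuron[OF assms] unfolding linN_def by simp

lemma dist_max:
  fixes v z :: "nat \<Rightarrow> real"
  assumes "d > 0"
  shows "Max ((\<lambda>k. (if k<d then v k else - v (k-d)) - (if k<d then z k else - z (k-d))) ` {..<2*d})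
     = linf_norm d (\<lambda>k. v k - z k)" (is "Max (?g ` _) = _")
proof (rule antisym)
  show "Max (?g ` {..<2*d}) \<le> linf_norm d (\<lambda>k. v k - z k)"
    unfolding linf_norm_def
  proof (rule Max.boundedI)
    show "finite (?g ` {..<2*d})" by simp
    show "?g ` {..<2*d} \<noteq> {}" using assms by (simp add: lessThan_empty_iff)
  next
    fix w assume "w \<in> ?g ` {..<2*d}"
    then obtain k where k: "k < 2*d" "w = ?g k" by auto
    show "w \<le> Max (insert 0 ((\<lambda>j. \<bar>v j - z j\<bar>) ` {..<d}))"
    proof (cases "k < d")
      case True
      have "\<bar>v k - z k\<bar> \<le> Max (insert 0 ((\<lambda>j. \<bar>v j - z j\<bar>) ` {..<d}))"
        using True by (intro Max_ge) auto
      moreover have "w = v k - z k" using k True by simp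
      ultimately show ?thesis using abs_ge_self[of "v k - z k"] by linarith
    next
      case False
      have "\<bar>v (k-d) - z (k-d)\<bar> \<le> Max (insert 0 ((\<lambda>j. \<bar>v j - z j\<bar>) ` {..<d}))"
        using False k by (intro Max_ge) auto
      moreover have "w = - (v (k-d) - z (k-d))" using k False by simp
      ultimately show ?thesis using abs_ge_minus_self[of "v (k-d) - z (k-d)"] by linarith
    qed
  qed
next
  have fin: "finite (?g ` {..<2*d})" "?g ` {..<2*d} \<noteq> {}" using assms by (auto simp: lessThan_empty_iff)
  have ge: "?g k \<le> Max (?g ` {..<2*d})" if "k < 2*d" for k
    using that fin by (intro Max_ge) auto
  show "linf_norm d (\<lambda>k. v k - z k) \<le> Max (?g ` {..<2*d})"
    unfolding linf_norm_def
  proof (rule Max.boundedI)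
    show "finite (insert 0 ((\<lambda>j. \<bar>v j - z j\<bar>) ` {..<d}))" by simp
    show "insert 0 ((\<lambda>j. \<bar>v j - z j\<bar>) ` {..<d}) \<noteq> {}" by simp
  next
    fix w assume "w \<in> insert 0 ((\<lambda>j. \<bar>v j - z j\<bar>) ` {..<d})"
    then consider "w = 0" | k where "k < d" "w = \<bar>v k - z k\<bar>" by auto
    then show "w \<le> Max (?g ` {..<2*d})"
    proof cases
      case 1
      have "?g 0 \<le> Max (?g ` {..<2*d})" "?g d \<le> Max (?g ` {..<2*d})" by (rule ge, use assms in simp)+
      moreover have "?g 0 = v 0 - z 0" "?g d = - (v 0 - z 0)" using assms by simp_all
      ultimately show ?thesis using 1 by linarith
    next
      case 2
      have "?g k \<le> Max (?g ` {..<2*d})" "?g (d+k) \<le> Max (?g ` {..<2*d})" by (rule ge, use 2 in simp)+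
      moreover have "?g k = v k - z k" "?g (d+k) = - (v k - z k)" using 2 by simp_all
      ultimately show ?thesis using 2 by (auto simp: abs_if)
    qed
  qed
qed

locale cons =
  fixes d K N L n :: nat and A :: real and x :: "nat \<Rightarrow> nat \<Rightarrow> real" and y :: "nat \<Rightarrow> nat"
begin

definition W where "W = 2*d + K + N"
definition dist where "dist u v = linf_norm d (\<lambda>k. u k - v k)"
definition Tset where "Tset l c = {t. t < N \<and> l*N+t < n \<and> y (l*N+t) = c}"

fun acc :: "nat \<Rightarrow> nat \<Rightarrow> nat \<Rightarrow> real" where
  "acc 0 c i = x i 0 - A"
| "acc (Suc l) c i = Max (insert (acc l c i) ((\<lambda>t. - dist (x i) (x (l*N+t))) ` Tset l c))"

definition V where "V l i j = (if j<d then x i j else if j<2*d then - x i (j-d)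
   else if j < 2*d+K then acc l (j-2*d) i else dist (x i) (x (l*N + (j-2*d-K))))"

definition neuron :: "real \<Rightarrow> nat \<Rightarrow> nat \<Rightarrow> neuron" where
 "neuron H l j = (if l = 0 then
     (if j<d then linN H {j} (\<lambda>_. 1) (\<lambda>_. 0)
      else if j<2*d then linN H {j-d} (\<lambda>_. -1) (\<lambda>_. 0)
      else if j < 2*d+K then linN H {0} (\<lambda>_. 1) (\<lambda>_. A)
      else (x (j-2*d-K), 0))
   else
     (if j<2*d then linN H {j} (\<lambda>_. 1) (\<lambda>_. 0)
      else if j<2*d+K then linN H (insert j ((\<lambda>t. 2*d+K+t) ` Tset (l-1) (j-2*d)))
           (\<lambda>k. if k = j then 1 else -1) (\<lambda>_. 0)
      else linN H {..<2*d} (\<lambda>_. 1)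
           (\<lambda>k. if k<d then x (l*N+(j-2*d-K)) k else - x (l*N+(j-2*d-K)) (k-d))))"

definition layer where
  "layer H l = (if l < L-1 then map (neuron H l) [0..<W] else map (\<lambda>c. neuron H l (2*d+c)) [0..<K])"

definition net where "net H = map (layer H) [0..<L]"

lemma Tset_fin: "finite (Tset l c)" unfolding Tset_def by auto

lemma layer0:
  assumes d: "d > 0" and i: "i < n" and j: "j < W"
    and bx: "\<forall>i<n. \<forall>k<d. \<bar>x i k\<bar> \<le> R" and bA: "\<bar>A\<bar> \<le> R" and H: "3*R < H"
  shows "linf_norm d (\<lambda>k. x i k - fst (neuron H 0 j) k) + snd (neuron H 0 j) = V 0 i j"
proof -
  have bu: "\<forall>k<d. \<bar>x i k\<bar> \<le> R" using bx i by auto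
  consider "j < d" | "d \<le> j" "j < 2*d" | "2*d \<le> j" "j < 2*d+K" | "2*d+K \<le> j" by linarith
  then show ?thesis
  proof cases
    case 1
    have "linf_norm d (\<lambda>k. x i k - fst (linN H {j} (\<lambda>_. 1) (\<lambda>_. 0)) k) + snd (linN H {j} (\<lambda>_. 1) (\<lambda>_. 0))
      = Max ((\<lambda>k. 1 * x i k - 0) ` {j})"
      using 1 bu H bA by (intro lin_neuron') auto
    then show ?thesis using 1 by (simp add: neuron_def V_def)
  next
    case 2
    have "linf_norm d (\<lambda>k. x i k - fst (linN H {j-d} (\<lambda>_. -1) (\<lambda>_. 0)) k) + snd (linN H {j-d} (\<lambda>_. -1) (\<lambda>_. 0))
      = Max ((\<lambda>k. -1 * x i k - 0) ` {j-d})"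
      using 2 bu H bA by (intro lin_neuron') auto
    then show ?thesis using 2 by (simp add: neuron_def V_def)
  next
    case 3
    have "linf_norm d (\<lambda>k. x i k - fst (linN H {0} (\<lambda>_. 1) (\<lambda>_. A)) k) + snd (linN H {0} (\<lambda>_. 1) (\<lambda>_. A))
      = Max ((\<lambda>k. 1 * x i k - A) ` {0})"
      using d bu bA H by (intro lin_neuron') auto
    then show ?thesis using 3 by (simp add: neuron_def V_def)
  next
    case 4
    then show ?thesis by (simp add: neuron_def V_def dist_def)
  qed
qed


lemma layerS:
  assumes d: "d > 0" and l: "0 < l" and j: "j < W"
    and u: "\<forall>k<W. u k = V (l-1) i k"
    and bV: "\<forall>k<W. \<bar>V (l-1) i k\<bar> \<le> R"
    and bx: "\<forall>k<d. \<bar>x p k\<bar> \<le> R" and p: "p = l*N+(j-2*d-K)" and H: "3*R < H"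
  shows "linf_norm W (\<lambda>k. u k - fst (neuron H l j) k) + snd (neuron H l j) = V l i j"
proof -
  have bu: "\<forall>k<W. \<bar>u k\<bar> \<le> R" using bV u by auto
  have R0: "0 \<le> R" using bu j by force
  consider "j < 2*d" | "2*d \<le> j" "j < 2*d+K" | "2*d+K \<le> j" by linarith
  then show ?thesis
  proof cases
    case 1
    have "linf_norm W (\<lambda>k. u k - fst (linN H {j} (\<lambda>_. 1) (\<lambda>_. 0)) k) + snd (linN H {j} (\<lambda>_. 1) (\<lambda>_. 0))
      = Max ((\<lambda>k. 1 * u k - 0) ` {j})"
      using 1 j bu H R0 by (intro lin_neuron') auto
    then show ?thesis using 1 l j u by (simp add: neuron_def V_def)
  next
    case 2
    define c where "c = j - 2*d"
    define S where "S = insert j ((\<lambda>t. 2*d+K+t) ` Tset (l-1) c)"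
    define s :: "nat \<Rightarrow> real" where "s = (\<lambda>k. if k = j then 1 else -1)"
    have SW: "S \<subseteq> {..<W}" using j unfolding S_def W_def Tset_def by auto
    have "linf_norm W (\<lambda>k. u k - fst (linN H S s (\<lambda>_. 0)) k) + snd (linN H S s (\<lambda>_. 0))
      = Max ((\<lambda>k. s k * u k - 0) ` S)"
      using SW bu H R0 by (intro lin_neuron') (auto simp: S_def s_def)
    also have "(\<lambda>k. s k * u k - 0) ` S
       = insert (acc (l-1) c i) ((\<lambda>t. - dist (x i) (x ((l-1)*N+t))) ` Tset (l-1) c)"
    proof -
      have "s j * u j - 0 = acc (l-1) c i" using 2 j u by (simp add: s_def V_def c_def)
      moreover have "(\<lambda>k. s k * u k - 0) ` ((\<lambda>t. 2*d+K+t) ` Tset (l-1) c)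
          = (\<lambda>t. - dist (x i) (x ((l-1)*N+t))) ` Tset (l-1) c"
        unfolding image_image
      proof (rule image_cong[OF refl])
        fix t assume "t \<in> Tset (l-1) c"
        then have "t < N" unfolding Tset_def by auto
        then show "s (2*d+K+t) * u (2*d+K+t) - 0 = - dist (x i) (x ((l-1)*N+t))"
          using 2 u unfolding s_def V_def W_def by auto
      qed
      ultimately show ?thesis unfolding S_def by simp
    qed
    also have "Max (insert (acc (l-1) c i) ((\<lambda>t. - dist (x i) (x ((l-1)*N+t))) ` Tset (l-1) c)) = acc l c i"
      using l by (cases l) auto
    finally show ?thesis using 2 l unfolding neuron_def V_def S_def s_def c_def by simp
  next
    case 3
    define a where "a = (\<lambda>k. if k<d then x p k else - x p (k-d))"
    have "linf_norm W (\<lambda>k. u k - fst (linN H {..<2*d} (\<lambda>_. 1) a) k) + snd (linN H {..<2*d} (\<lambda>_. 1) a)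
      = Max ((\<lambda>k. 1 * u k - a k) ` {..<2*d})"
      using bu bx H R0 d unfolding a_def W_def by (intro lin_neuron') (auto simp: lessThan_empty_iff)
    also have "(\<lambda>k. 1 * u k - a k) ` {..<2*d} = (\<lambda>k. (if k<d then x i k else - x i (k-d))
          - (if k<d then x p k else - x p (k-d))) ` {..<2*d}"
      by (rule image_cong[OF refl]) (use u in \<open>auto simp: a_def V_def W_def\<close>)
    also have "Max ((\<lambda>k. (if k<d then x i k else - x i (k-d))
          - (if k<d then x p k else - x p (k-d))) ` {..<2*d}) = dist (x i) (x p)" unfolding dist_def by (rule dist_max[OF d])
    finally show ?thesis using 3 l j unfolding neuron_def V_def a_def p by (simp add: W_def)
  qed
qed


lemma net_len: "length (net H) = L" by (simp add: net_def)
lemma net_nth: "l < L \<Longrightarrow> net H ! l = layer H l" by (simp add: net_def)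

lemma hid:
  assumes d: "d > 0" and bx: "\<forall>p<n + L*N + W. \<forall>k<d. \<bar>x p k\<bar> \<le> R" and bA: "\<bar>A\<bar> \<le> R"
    and bV: "\<forall>l<L. \<forall>k<W. \<bar>V l i k\<bar> \<le> R" and H: "3*R < H" and i: "i < n"
  shows "l < L-1 \<Longrightarrow> j < W \<Longrightarrow> eval_net d (take (Suc l) (net H)) (x i) j = V l i j"
proof (induction l arbitrary: j)
  case 0
  have "take (Suc 0) (net H) = [layer H 0]"
    using 0 by (simp add: take_Suc_conv_app_nth net_len net_nth)
  moreover have "layer H 0 = map (neuron H 0) [0..<W]" using 0 by (simp add: layer_def)
  moreover have "linf_norm d (\<lambda>k. x i k - fst (neuron H 0 j) k) + snd (neuron H 0 j) = V 0 i j"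
    using layer0[OF d i 0(2) _ bA H] bx i by auto
  ultimately show ?case using 0 by (simp add: eval_layer_def)
next
  case (Suc l)
  have tk: "take (Suc (Suc l)) (net H) = take (Suc l) (net H) @ [layer H (Suc l)]"
    using Suc by (simp add: take_Suc_conv_app_nth net_len net_nth)
  have lst: "last (take (Suc l) (net H)) = layer H l"
    using Suc by (simp add: take_Suc_conv_app_nth net_len net_nth)
  have lenl: "length (layer H l) = W" using Suc by (simp add: layer_def)
  have lay: "layer H (Suc l) = map (neuron H (Suc l)) [0..<W]" using Suc by (simp add: layer_def)
  have IH: "\<forall>k<W. eval_net d (take (Suc l) (net H)) (x i) k = V l i k" using Suc by auto
  have "linf_norm W (\<lambda>k. eval_net d (take (Suc l) (net H)) (x i) k - fst (neuron H (Suc l) j) k)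
     + snd (neuron H (Suc l) j) = V (Suc l) i j"
  proof (rule layerS[OF d _ Suc(3), where R=R and p="Suc l*N+(j-2*d-K)"])
    show "\<forall>k<d. \<bar>x (Suc l * N + (j - 2 * d - K)) k\<bar> \<le> R"
    proof -
      have "Suc l * N + (j - 2 * d - K) < n + L*N + W"
      proof -
        have "Suc l * N \<le> L * N" using mult_le_mono1[of "Suc l" L N] Suc by simp
        then show ?thesis using Suc(3) by linarith
      qed
      then show ?thesis using bx by blast
    qed
  qed (use IH bV Suc H in auto)
  moreover have "take (Suc l) (net H) \<noteq> []"
  proof -
    have "length (net H) \<noteq> 0" using Suc(2) by (simp add: net_len)
    then show ?thesis by auto
  qed
  ultimately show ?case using tk lst lenl lay Suc by (simp add: eval_net_snoc eval_layer_def)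
qed

lemma outp:
  assumes d: "d > 0" and bx: "\<forall>p<n + L*N + W. \<forall>k<d. \<bar>x p k\<bar> \<le> R" and bA: "\<bar>A\<bar> \<le> R"
    and bV: "\<forall>l<L. \<forall>k<W. \<bar>V l i k\<bar> \<le> R" and H: "3*R < H" and i: "i < n"
    and L: "L \<ge> 2" and c: "c < K"
  shows "eval_net d (net H) (x i) c = acc (L-1) c i"
proof -
  define l where "l = L - 2"
  have Ll: "L - 1 = Suc l" using L unfolding l_def by simp
  have tk: "net H = take (Suc l) (net H) @ [layer H (Suc l)]"
  proof -
    have e: "Suc (Suc l) = length (net H)" using L by (simp add: net_len l_def)
    have "net H = take (Suc (Suc l)) (net H)" by (subst e) simp
    also have "\<dots> = take (Suc l) (net H) @ [net H ! Suc l]"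
      by (rule take_Suc_conv_app_nth) (use e in simp)
    also have "net H ! Suc l = layer H (Suc l)" using e by (simp add: net_nth net_len)
    finally show ?thesis .
  qed
  have lst: "last (take (Suc l) (net H)) = layer H l"
    using L by (simp add: take_Suc_conv_app_nth net_len net_nth l_def)
  have "l < L - 1" using L unfolding l_def by linarith
  then have lenl: "length (layer H l) = W" by (simp add: layer_def)
  have lay: "layer H (Suc l) = map (\<lambda>c. neuron H (Suc l) (2*d+c)) [0..<K]"
    using Ll by (simp add: layer_def)
  have IH: "\<forall>k<W. eval_net d (take (Suc l) (net H)) (x i) k = V l i k"
    using hid[OF d bx bA bV H i] L by (simp add: l_def)
  have jW: "2*d+c < W" using c by (simp add: W_def)
  have "linf_norm W (\<lambda>k. eval_net d (take (Suc l) (net H)) (x i) k - fst (neuron H (Suc l) (2*d+c)) k)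
     + snd (neuron H (Suc l) (2*d+c)) = V (Suc l) i (2*d+c)"
  proof (rule layerS[OF d _ jW, where R=R and p="Suc l*N+(2*d+c-2*d-K)"])
    show "\<forall>k<d. \<bar>x (Suc l * N + (2*d+c - 2 * d - K)) k\<bar> \<le> R"
    proof -
      have "Suc l * N + (2*d+c - 2 * d - K) < n + L*N + W"
      proof -
        have "Suc l * N \<le> L * N" using Ll by (metis diff_le_self mult_le_mono1)
        then show ?thesis using jW by linarith
      qed
      then show ?thesis using bx by blast
    qed
  qed (use IH bV Ll H in auto)
  moreover have "V (Suc l) i (2*d+c) = acc (L-1) c i" using c Ll by (simp add: V_def)
  moreover have "take (Suc l) (net H) \<noteq> []"
  proof -
    have "length (net H) \<noteq> 0" using L by (simp add: net_len)
    then show ?thesis by auto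
  qed
  ultimately show ?thesis using c lst lenl lay
    by (subst tk) (simp add: eval_net_snoc eval_layer_def del: take_Suc)
qed


lemma acc_mono: "acc l c i \<le> acc (Suc l) c i"
  by (simp add: Tset_fin)

lemma acc_self: "i < n \<Longrightarrow> i < l*N \<Longrightarrow> acc l (y i) i \<ge> 0"
proof (induction l)
  case 0 then show ?case by simp
next
  case (Suc l)
  show ?case
  proof (cases "i < l*N")
    case True
    then show ?thesis using Suc acc_mono[of l "y i" i] by linarith
  next
    case False
    define t where "t = i - l*N"
    have t: "t \<in> Tset l (y i)" "l*N+t = i" using False Suc(2,3) unfolding Tset_def t_def by auto
    have "- dist (x i) (x (l*N+t)) \<le> acc (Suc l) (y i) i"
      using t(1) by (simp add: Tset_fin)
    moreover have "dist (x i) (x (l*N+t)) = 0" using t(2) unfolding dist_def linf_norm_def by (auto intro!: Max_eqI)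
    ultimately show ?thesis by simp
  qed
qed

lemma acc_other:
  assumes "i < n" "r_separated r d n x y" "c \<noteq> y i" "x i 0 - A < -2*r"
  shows "acc l c i < -2*r"
proof (induction l)
  case 0 then show ?case using assms by simp
next
  case (Suc l)
  have "- dist (x i) (x (l*N+t)) < -2*r" if "t \<in> Tset l c" for t
  proof -
    have "l*N+t < n" "y (l*N+t) = c" using that unfolding Tset_def by auto
    then have "linf_norm d (\<lambda>k. x i k - x (l*N+t) k) > 2*r"
      using assms unfolding r_separated_def by auto
    then show ?thesis by (simp add: dist_def)
  qed
  then show ?case using Suc by (simp add: Tset_fin)
qed

end

lemma zero_layer:
  assumes "\<forall>j<m. u j = 0"
  shows "eval_layer m [((\<lambda>_. 0), 0)] u = (\<lambda>_. 0)"
proof -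
  have "(\<lambda>j. \<bar>u j - 0\<bar>) ` {..<m} \<subseteq> {0}" using assms by auto
  then have "Max (insert 0 ((\<lambda>j. \<bar>u j - 0\<bar>) ` {..<m})) = 0" by (auto intro!: Max_eqI)
  then show ?thesis unfolding eval_layer_def linf_norm_def by (auto simp: fun_eq_iff)
qed

lemma zero_net:
  "\<forall>j<m. u j = 0 \<Longrightarrow> eval_net m (replicate k [((\<lambda>_. 0), 0)] @ rest) u
     = eval_net (if k = 0 then m else 1) rest (if k = 0 then u else (\<lambda>_. 0))"
proof (induction k arbitrary: m u)
  case 0 then show ?case by simp
next
  case (Suc k)
  have "eval_net m (replicate (Suc k) [((\<lambda>_. 0), 0)] @ rest) u
     = eval_net 1 (replicate k [((\<lambda>_. 0), 0)] @ rest) (\<lambda>_. 0)"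
    using zero_layer[OF Suc(2)] by simp
  also have "\<dots> = eval_net (if k = 0 then 1 else 1) rest (if k = 0 then (\<lambda>_. 0) else (\<lambda>_. 0))"
    by (rule Suc(1)) simp
  finally show ?case by simp
qed


theorem mainTheorem5:
  fixes r :: real and L d n K :: nat
    and x :: "nat \<Rightarrow> nat \<Rightarrow> real" and y :: "nat \<Rightarrow> nat"
  assumes "r > 0" and "L \<ge> 2" and "K \<ge> 2"
    and "\<forall>i<n. y i < K"
    and "r_separated r d n x y"
  shows "\<exists>net :: layer list.
           length net = L \<and>
           (\<forall>l < L - 1. length (net ! l) \<le>
               nat \<lceil>real n / real (L - 1)\<rceil> + K + 2 * d) \<and>
           length (net ! (L - 1)) = K \<and>
           (\<forall>i<n. margin K (eval_net d net (x i)) (y i) / 2 > r)"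
proof (cases "d = 0")
  case True
  define z :: layer where "z = [((\<lambda>_. 0), 0)]"
  define outl :: layer where "outl = map (\<lambda>c. ((\<lambda>_. 0), if c = y 0 then 3*r else 0)) [0..<K]"
  define net where "net = replicate (L-1) z @ [outl]"
  have len: "length net = L" using assms(2) by (simp add: net_def)
  have hid: "\<forall>l < L - 1. length (net ! l) \<le> nat \<lceil>real n / real (L - 1)\<rceil> + K + 2 * d"
    using assms(3) by (auto simp: net_def nth_append z_def)
  have outlen: "length (net ! (L - 1)) = K" by (simp add: net_def nth_append outl_def)
  have ev: "eval_net d net u = eval_layer 1 outl (\<lambda>_. 0)" for u
  proof -
    have "eval_net d net u = eval_net 1 [outl] (\<lambda>_. 0)"
      unfolding net_def z_def using zero_net[of d u "L-1" "[outl]"] True assms(2) by simp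
    then show ?thesis by simp
  qed
  have g: "eval_net d net u c = (if c = y 0 then 3*r else 0)" if "c < K" for u c
  proof -
    have "linf_norm 1 (\<lambda>j. 0 - 0) = 0" unfolding linf_norm_def by (auto intro!: Max_eqI)
    then show ?thesis using that by (simp add: ev eval_layer_def outl_def)
  qed
  have sep: "y i = y 0" if "i < n" for i
  proof (rule ccontr)
    assume "y i \<noteq> y 0"
    then have "linf_norm d (\<lambda>k. x i k - x 0 k) > 2*r" using assms(5) that unfolding r_separated_def by auto
    moreover have "linf_norm d (\<lambda>k. x i k - x 0 k) = 0" using True by (simp add: linf_norm_def)
    ultimately show False using assms(1) by simp
  qed
  have "margin K (eval_net d net (x i)) (y i) / 2 > r" if i: "i < n" for i
  proof -
    have yK: "y i < K" using assms(4) i by auto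
    have ne: "{..<K} - {y i} \<noteq> {}"
    proof -
      have "(if y i = 0 then 1 else 0) \<in> {..<K} - {y i}" using assms(3) by auto
      then show ?thesis by blast
    qed
    have "(\<lambda>j. eval_net d net (x i) j) ` ({..<K} - {y i}) = (\<lambda>_. 0) ` ({..<K} - {y i})"
      by (rule image_cong[OF refl]) (use sep[OF i] g in auto)
    also have "\<dots> = {0}" using ne by auto
    finally have "Max ((\<lambda>j. eval_net d net (x i) j) ` ({..<K} - {y i})) = 0" by simp
    moreover have "eval_net d net (x i) (y i) = 3*r" using g[OF yK] sep[OF i] by simp
    ultimately show ?thesis using assms(1) unfolding margin_def by simp
  qed
  then show ?thesis using len hid outlen by blast
next
  case False
  then have d: "d > 0" by simp
  define N where "N = nat \<lceil>real n / real (L - 1)\<rceil>"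
  obtain Rx where Rx: "\<forall>z\<in>{..<n}. \<bar>x z 0\<bar> \<le> Rx" using finite_bound[of "{..<n}" "\<lambda>z. x z 0"] by auto
  define A where "A = Rx + 2*r + 1"
  interpret C: cons d K N L n A x y .
  obtain R1 where R1: "\<forall>z\<in>{..<L}\<times>{..<n}\<times>{..<C.W}. \<bar>(\<lambda>(l,i,k). C.V l i k) z\<bar> \<le> R1"
    using finite_bound[of "{..<L}\<times>{..<n}\<times>{..<C.W}" "\<lambda>(l,i,k). C.V l i k"] by auto
  obtain R2 where R2: "\<forall>z\<in>{..<n + L*N + C.W}\<times>{..<d}. \<bar>(\<lambda>(p,k). x p k) z\<bar> \<le> R2"
    using finite_bound[of "{..<n + L*N + C.W}\<times>{..<d}" "\<lambda>(p,k). x p k"] by auto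
  define R where "R = \<bar>R1\<bar> + \<bar>R2\<bar> + \<bar>A\<bar>"
  define H where "H = 3*R + 1"
  have bx: "\<forall>p<n + L*N + C.W. \<forall>k<d. \<bar>x p k\<bar> \<le> R"
  proof (intro allI impI)
    fix p k assume "p < n + L*N + C.W" "k < d"
    then have "\<bar>x p k\<bar> \<le> R2" using R2 by auto
    then show "\<bar>x p k\<bar> \<le> R" unfolding R_def by linarith
  qed
  have bA: "\<bar>A\<bar> \<le> R" unfolding R_def by linarith
  have bV: "\<forall>l<L. \<forall>k<C.W. \<bar>C.V l i k\<bar> \<le> R" if "i < n" for i
  proof (intro allI impI)
    fix l k assume "l < L" "k < C.W"
    then have "\<bar>C.V l i k\<bar> \<le> R1" using R1 that by auto
    then show "\<bar>C.V l i k\<bar> \<le> R" unfolding R_def by linarith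
  qed
  have H: "3*R < H" unfolding H_def by simp
  have nN: "n \<le> (L-1) * N"
  proof -
    have L1: "real (L-1) > 0" using assms(2) by simp
    have "real n / real (L-1) \<le> real N"
    proof -
      have "real n / real (L-1) \<le> of_int \<lceil>real n / real (L - 1)\<rceil>" by (rule le_of_int_ceiling)
      moreover have "of_int \<lceil>real n / real (L - 1)\<rceil> = real N"
        unfolding N_def by (simp add: ceiling_le_zero)
      ultimately show ?thesis by (metis order.trans order_refl)
    qed
    then have "real n \<le> real N * real (L-1)" using L1 by (simp add: pos_divide_le_eq)
    then have "real n \<le> real ((L-1) * N)" by (simp add: mult.commute)
    then show ?thesis by linarith
  qed
  have len: "length (C.net H) = L" by (rule C.net_len)
  have hid: "\<forall>l < L - 1. length (C.net H ! l) \<le> nat \<lceil>real n / real (L - 1)\<rceil> + K + 2 * d"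
  proof (intro allI impI)
    fix l assume l: "l < L - 1"
    then have "length (C.net H ! l) = 2*d + K + N" by (simp add: C.net_nth C.layer_def C.W_def)
    then show "length (C.net H ! l) \<le> nat \<lceil>real n / real (L - 1)\<rceil> + K + 2 * d"
      unfolding N_def by linarith
  qed
  have outlen: "length (C.net H ! (L - 1)) = K"
    using assms(2) by (simp add: C.net_nth C.layer_def)
  have "margin K (eval_net d (C.net H) (x i)) (y i) / 2 > r" if i: "i < n" for i
  proof -
    have g: "eval_net d (C.net H) (x i) c = C.acc (L-1) c i" if "c < K" for c
      by (rule C.outp[OF d bx bA bV[OF i] H i assms(2) that])
    have yK: "y i < K" using assms(4) i by auto
    have ne: "{..<K} - {y i} \<noteq> {}"
    proof -
      have "(if y i = 0 then 1 else 0) \<in> {..<K} - {y i}" using assms(3) by auto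
      then show ?thesis by blast
    qed
    have "\<bar>x i 0\<bar> \<le> Rx" using Rx i by auto
    then have base: "x i 0 - A < -2*r" unfolding A_def by linarith
    have "Max ((\<lambda>j. eval_net d (C.net H) (x i) j) ` ({..<K} - {y i})) < -2*r"
    proof (subst Max_less_iff)
      show "finite ((\<lambda>j. eval_net d (C.net H) (x i) j) ` ({..<K} - {y i}))" by simp
      show "(\<lambda>j. eval_net d (C.net H) (x i) j) ` ({..<K} - {y i}) \<noteq> {}" using ne by simp
      show "\<forall>a\<in>(\<lambda>j. eval_net d (C.net H) (x i) j) ` ({..<K} - {y i}). a < - 2 * r"
        using g C.acc_other[OF i assms(5) _ base] by auto
    qed
    moreover have "eval_net d (C.net H) (x i) (y i) \<ge> 0"
    proof -
      have "i < (L-1) * N" using i nN by linarith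
      then show ?thesis using g[OF yK] C.acc_self[OF i] by simp
    qed
    ultimately show ?thesis unfolding margin_def by simp
  qed
  then show ?thesis using len hid outlen by blast
qed

end
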